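(* Let $V:P\to B(\mathcal{H})$ be an isometric representation with commuting range projections. Then: (1) for every $g\in G$ the operator $W_g:=V_b^*V_a$, where $g=ab^{-1}$ with $a,b\in P$, does not depend on the choice of $a,b$, and it is a partial isometry; (2) the projections $E_g:=W_gW_g^*$, $g\in G$, pairwise commute; (3) if $g_1,g_2\in G$ satisfy $g_1g_2^{-1}\in P$, then $E_{g_1}\le E_{g_2}$; (4) the map $G\ni g\mapsto W_g\in B(\mathcal{H})$ is strongly continuous; (5) for all $g,h\in G$, $W_gW_h=E_gW_{hg}$.
   Context: Standing assumptions: $G$ is a second countable locally compact group with left Haar measure $dg$ and modular function $\Delta$; $P\subset G$ is a closed subsemigroup with identity $e\in P$, such that $G=PP^{-1}$ and the interior $Int(P)$ of $P$ is dense in $P$. An isometric representation with commuting range projections is a map $V:P\to B(\mathcal{H})$ ($\mathcal{H}$ a Hilbert space) such that $a\mapsto V_a$ and $a\mapsto V_a^*$ are strongly continuous, each $V_a$ is an isometry, $V_aV_b=V_{ba}$ for $a,b\in P$, and the projections $E_a:=V_aV_a^*$ ($a\in P$) pairwise commute. *)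

theory Defs
  imports "HOL-Analysis.Analysis"
begin

text \<open>The group G is a type 'g of class topological_group_add, written
additively (not assumed commutative): the product gh of the paper is g + h, the
inverse g^{-1} is -g, and g h^{-1} is g - h = g + (-h); the identity is 0.
The Hilbert space is a real Hilbert space 'h (class real_inner + complete_space);
operators are bounded linear maps 'h => 'h, and T^* is the library adjoint.\<close>

definition partial_isometry :: "('h::real_inner \<Rightarrow> 'h) \<Rightarrow> bool" where
  "partial_isometry T \<longleftrightarrow> bounded_linear T \<and>
     (\<forall>x. (\<forall>y. T y = 0 \<longrightarrow> x \<bullet> y = 0) \<longrightarrow> norm (T x) = norm x)"

definition op_le :: "('h::real_inner \<Rightarrow> 'h) \<Rightarrow> ('h \<Rightarrow> 'h) \<Rightarrow> bool" where
  "op_le S T \<longleftrightarrow> (\<forall>x. S x \<bullet> x \<le> T x \<bullet> x)"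

definition admissible_semigroup :: "'g::{topological_group_add,t2_space,second_countable_topology} set \<Rightarrow> bool" where
  "admissible_semigroup P \<longleftrightarrow>
     locally_compact_space (euclidean :: 'g topology) \<and>
     closed P \<and> 0 \<in> P \<and> (\<forall>a\<in>P. \<forall>b\<in>P. a + b \<in> P) \<and>
     (\<forall>g. \<exists>a\<in>P. \<exists>b\<in>P. g = a - b) \<and>
     P \<subseteq> closure (interior P)"

definition isom_rep_crp :: "'g::{topological_group_add} set \<Rightarrow> ('g \<Rightarrow> 'h::{real_inner,complete_space} \<Rightarrow> 'h) \<Rightarrow> bool" where
  "isom_rep_crp P V \<longleftrightarrow>
     (\<forall>a\<in>P. bounded_linear (V a)) \<and>
     (\<forall>x. continuous_on P (\<lambda>a. V a x)) \<and>
     (\<forall>x. continuous_on P (\<lambda>a. adjoint (V a) x)) \<and>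
     (\<forall>a\<in>P. \<forall>x. norm (V a x) = norm x) \<and>
     (\<forall>a\<in>P. \<forall>b\<in>P. V a \<circ> V b = V (b + a)) \<and>
     (\<forall>a\<in>P. \<forall>b\<in>P. (V a \<circ> adjoint (V a)) \<circ> (V b \<circ> adjoint (V b))
                   = (V b \<circ> adjoint (V b)) \<circ> (V a \<circ> adjoint (V a)))"

definition Wop :: "'g::group_add set \<Rightarrow> ('g \<Rightarrow> 'h::real_inner \<Rightarrow> 'h) \<Rightarrow> 'g \<Rightarrow> 'h \<Rightarrow> 'h" where
  "Wop P V g = (let ab = (SOME ab. fst ab \<in> P \<and> snd ab \<in> P \<and> g = fst ab - snd ab)
                in adjoint (V (snd ab)) \<circ> V (fst ab))"

definition Eop :: "'g::group_add set \<Rightarrow> ('g \<Rightarrow> 'h::real_inner \<Rightarrow> 'h) \<Rightarrow> 'g \<Rightarrow> 'h \<Rightarrow> 'h" where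
  "Eop P V g = Wop P V g \<circ> adjoint (Wop P V g)"

end

theory Submission imports Defs "HOL-Analysis.Analysis" begin


lemma riesz_rep:
  fixes f :: "'h::{real_inner,complete_space} \<Rightarrow> real"
  assumes bl: "bounded_linear f"
  shows "\<exists>z. \<forall>x. f x = x \<bullet> z"
proof (cases "\<forall>x. f x = 0")
  case True then show ?thesis by (intro exI[of _ 0]) auto
next
  case False
  interpret f: bounded_linear f by (rule bl)
  from False obtain y where "f y \<noteq> 0" by auto
  define y0 where "y0 = y /\<^sub>R f y"
  have fy0: "f y0 = 1" using \<open>f y \<noteq> 0\<close> by (simp add: y0_def f.scale)
  define A where "A = {x. f x = 1}"
  define D where "D = Inf ((\<lambda>x. x \<bullet> x) ` A)"
  have Ane: "(\<lambda>x. x \<bullet> x) ` A \<noteq> {}" using fy0 A_def by auto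
  have bdd: "bdd_below ((\<lambda>x. x \<bullet> x) ` A)" by (rule bdd_belowI[of _ 0]) auto
  have Dle: "D \<le> x \<bullet> x" if "x \<in> A" for x
    unfolding D_def using that bdd by (intro cInf_lower) auto
  have "\<exists>x\<in>A. x \<bullet> x < D + 1 / (real n + 1)" for n
  proof -
    have "Inf ((\<lambda>x. x \<bullet> x) ` A) < D + 1 / (real n + 1)" unfolding D_def
      by (simp add: add_pos_pos)
    from cInf_lessD[OF Ane this] show ?thesis by auto
  qed
  then obtain X where XA: "\<And>n. X n \<in> A" and Xlt: "\<And>n. X n \<bullet> X n < D + 1 / (real n + 1)"
    by metis
  have mid: "(X m - X n) \<bullet> (X m - X n) \<le> 2 / (real m + 1) + 2 / (real n + 1)" for m n
  proof -
    have "(X m + X n) /\<^sub>R 2 \<in> A" using XA[of m] XA[of n] by (simp add: A_def f.add f.scale)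
    then have "D \<le> ((X m + X n) /\<^sub>R 2) \<bullet> ((X m + X n) /\<^sub>R 2)" by (rule Dle)
    also have "\<dots> = ((X m + X n) \<bullet> (X m + X n)) / 4" by (simp add: inner_commute)
    finally have h: "4 * D \<le> (X m + X n) \<bullet> (X m + X n)" by simp
    have par: "(X m - X n) \<bullet> (X m - X n) = 2 * (X m \<bullet> X m) + 2 * (X n \<bullet> X n) - (X m + X n) \<bullet> (X m + X n)"
      by (simp add: inner_diff inner_add inner_commute)
    show ?thesis using h par Xlt[of m] Xlt[of n] by linarith
  qed
  have "Cauchy X"
  proof (rule CauchyI)
    fix e :: real assume e: "0 < e"
    obtain M :: nat where M: "4 / (e*e) < real M" using reals_Archimedean2 by blast
    have "4 / (real M + 1) < e * e"
    proof -
      have "4 < real M * (e*e)" using M e by (simp add: divide_less_eq mult.commute)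
      then have "4 < (real M + 1) * (e * e)" using e
        by (smt (verit, best) mult_pos_pos distrib_right mult_1)
      then show ?thesis by (simp add: divide_less_eq mult.commute)
    qed
    moreover have "norm (X m - X n) < e" if "m \<ge> M" "n \<ge> M" for m n
    proof -
      have a: "2 / (real m + 1) \<le> 2 / (real M + 1)" using that by (simp add: frac_le)
      have b: "2 / (real n + 1) \<le> 2 / (real M + 1)" using that by (simp add: frac_le)
      have "(norm (X m - X n))^2 < e^2"
      proof -
        have "4 / (real M + 1) = 2 / (real M + 1) + 2 / (real M + 1)" by simp
        moreover have "(norm (X m - X n))^2 = (X m - X n) \<bullet> (X m - X n)" by (rule power2_norm_eq_inner)
        moreover have "e^2 = e * e" by (rule power2_eq_square)
        ultimately show ?thesis using mid[of m n] a b \<open>4 / (real M + 1) < e * e\<close>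
          by linarith
      qed
      then show ?thesis using e by (simp add: power_less_imp_less_base)
    qed
    ultimately show "\<exists>M. \<forall>m\<ge>M. \<forall>n\<ge>M. norm (X m - X n) < e" by blast
  qed
  then obtain z where lim: "X \<longlonglongrightarrow> z" using Cauchy_convergent convergent_def by blast
  have fz: "f z = 1"
  proof -
    have "(\<lambda>n. f (X n)) \<longlonglongrightarrow> f z" using f.tendsto[OF lim] .
    moreover have "(\<lambda>n. f (X n)) = (\<lambda>n. 1)" using XA by (auto simp: A_def)
    ultimately have "(\<lambda>n. 1::real) \<longlonglongrightarrow> f z" by simp
    then show ?thesis by (simp add: LIMSEQ_const_iff)
  qed
  have zmin: "z \<bullet> z \<le> w \<bullet> w" if "w \<in> A" for w
  proof -
    have l1: "(\<lambda>n. X n \<bullet> X n) \<longlonglongrightarrow> z \<bullet> z" using tendsto_inner[OF lim lim] .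
    have l2: "(\<lambda>n. D + 1 / (real n + 1)) \<longlonglongrightarrow> D + 0"
      by (intro tendsto_add tendsto_const) (use LIMSEQ_inverse_real_of_nat in \<open>simp add: inverse_eq_divide add.commute\<close>)
    have "z \<bullet> z \<le> D + 0" using l1 l2 by (rule LIMSEQ_le) (auto intro: less_imp_le Xlt)
    then show ?thesis using Dle[OF that] by simp
  qed
  have orth: "z \<bullet> k = 0" if "f k = 0" for k
  proof -
    define s where "s = z \<bullet> k"
    define q where "q = k \<bullet> k"
    have q0: "q \<ge> 0" by (simp add: q_def)
    define t where "t = - s / (q + 1)"
    have "z + t *\<^sub>R k \<in> A" using fz that by (simp add: A_def f.add f.scale)
    then have "z \<bullet> z \<le> (z + t *\<^sub>R k) \<bullet> (z + t *\<^sub>R k)" by (rule zmin)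
    then have "0 \<le> 2 * t * s + t * t * q"
      by (simp add: inner_add inner_commute s_def q_def algebra_simps)
    then have "0 \<le> (2 * t * s + t * t * q) * ((q+1)*(q+1))" using q0 by simp
    also have "\<dots> = 2 * s * (t * (q+1)) * (q+1) + q * (t * (q+1)) * (t * (q+1))"
      by (simp add: algebra_simps)
    also have "t * (q + 1) = - s" using q0 unfolding t_def by (simp add: field_simps)
    also have "2 * s * (- s) * (q+1) + q * (- s) * (- s) = - s * s * (q + 2)"
      by (simp add: algebra_simps)
    finally have "s * s * (q + 2) \<le> 0" by simp
    then have "s * s \<le> 0" using q0 by (smt (verit) mult_pos_pos zero_le_square)
    then have "s = 0" by (simp add: mult_le_0_iff) (meson antisym)
    then show ?thesis unfolding s_def .
  qed
  have zz: "z \<bullet> z \<noteq> 0" using fz by auto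
  have "f x = x \<bullet> (z /\<^sub>R (z \<bullet> z))" for x
  proof -
    have "f (x - f x *\<^sub>R z) = 0" using fz by (simp add: f.diff f.scale)
    then have "z \<bullet> (x - f x *\<^sub>R z) = 0" by (rule orth)
    then have "z \<bullet> x = f x * (z \<bullet> z)" by (simp add: inner_diff)
    then show ?thesis using zz by (simp add: inner_commute)
  qed
  then show ?thesis by blast
qed

lemma adjoint_ex:
  fixes T :: "'a::{real_inner,complete_space} \<Rightarrow> 'b::real_inner"
  assumes "bounded_linear T"
  shows "T x \<bullet> y = x \<bullet> adjoint T y"
proof -
  have "\<forall>y. \<exists>z. \<forall>x. T x \<bullet> y = x \<bullet> z"
  proof
    fix y
    have "bounded_linear (\<lambda>x. T x \<bullet> y)"
      using bounded_linear_compose[OF bounded_linear_inner_left assms] by simp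
    then show "\<exists>z. \<forall>x. T x \<bullet> y = x \<bullet> z" by (rule riesz_rep)
  qed
  then obtain g where "\<forall>y x. T x \<bullet> y = x \<bullet> g y" by metis
  then have "\<exists>g. \<forall>x y. T x \<bullet> y = x \<bullet> g y" by blast
  then have "\<forall>x y. T x \<bullet> y = x \<bullet> adjoint T y" unfolding adjoint_def by (rule someI_ex)
  then show ?thesis by blast
qed

lemma adjoint_bl:
  fixes T :: "'a::{real_inner,complete_space} \<Rightarrow> 'b::real_inner"
  assumes bl: "bounded_linear T"
  shows "bounded_linear (adjoint T)"
proof -
  interpret T: bounded_linear T by (rule bl)
  obtain K where K: "\<And>x. norm (T x) \<le> norm x * K" "K > 0" using T.pos_bounded by blast
  note ad = adjoint_ex[OF bl]
  show ?thesis
  proof (rule bounded_linear_intro[where K=K])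
    fix x y
    show "adjoint T (x + y) = adjoint T x + adjoint T y"
      by (rule vector_eq_ldot[THEN iffD1]) (auto simp: ad[symmetric] inner_add)
  next
    fix r x
    show "adjoint T (r *\<^sub>R x) = r *\<^sub>R adjoint T x"
      by (rule vector_eq_ldot[THEN iffD1]) (auto simp: ad[symmetric])
  next
    fix y
    show "norm (adjoint T y) \<le> norm y * K"
    proof (cases "adjoint T y = 0")
      case True then show ?thesis using K by simp
    next
      case False
      have "(norm (adjoint T y))^2 = T (adjoint T y) \<bullet> y"
        by (simp add: ad power2_norm_eq_inner)
      also have "\<dots> \<le> norm (T (adjoint T y)) * norm y" by (rule norm_cauchy_schwarz)
      also have "\<dots> \<le> norm (adjoint T y) * K * norm y" using K by (simp add: mult_right_mono)
      finally have "norm (adjoint T y) * norm (adjoint T y) \<le> norm (adjoint T y) * (norm y * K)"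
        by (simp add: power2_eq_square mult_ac)
      then show ?thesis using False by simp
    qed
  qed
qed



lemma ga1: fixes b b' c d :: "'g::group_add"
  assumes "-b' + b = c - d" shows "b + d = b' + c"
proof -
  have "b = b' + (c - d)" using assms by (metis add_minus_cancel)
  then show ?thesis by (simp add: add.assoc)
qed

lemma ga2: fixes a b a' b' :: "'g::group_add"
  assumes "a - b = a' - b'" shows "-a' + a = -b' + b"
proof -
  have "a = (a - b) + b" by (simp only: diff_add_cancel)
  also have "\<dots> = (a' - b') + b" using assms by (simp only:)
  finally have "-a' + a = -a' + ((a' + - b') + b)" by (simp only: diff_conv_add_uminus)
  also have "\<dots> = -b' + b" by (simp only: add.assoc minus_add_cancel)
  finally show ?thesis .
qed

locale crp =
  fixes P :: "'g::{topological_group_add,t2_space,second_countable_topology} set"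
    and V :: "'g \<Rightarrow> 'h::{real_inner,complete_space} \<Rightarrow> 'h"
  assumes adm: "admissible_semigroup P" and rep: "isom_rep_crp P V"
begin

abbreviation Ad where "Ad a \<equiv> adjoint (V a)"

lemma zeroP: "0 \<in> P" using adm by (simp add: admissible_semigroup_def)
lemma addP: "a \<in> P \<Longrightarrow> b \<in> P \<Longrightarrow> a + b \<in> P" using adm by (simp add: admissible_semigroup_def)
lemma dec: "\<exists>a\<in>P. \<exists>b\<in>P. g = a - b" using adm by (simp add: admissible_semigroup_def)

lemma bl: "a \<in> P \<Longrightarrow> bounded_linear (V a)" using rep by (simp add: isom_rep_crp_def)
lemma blA: "a \<in> P \<Longrightarrow> bounded_linear (Ad a)" using bl adjoint_bl by blast
lemma adj: "a \<in> P \<Longrightarrow> V a x \<bullet> y = x \<bullet> Ad a y" using bl adjoint_ex by blast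
lemma adj': "a \<in> P \<Longrightarrow> Ad a y \<bullet> x = y \<bullet> V a x" using adj by (simp add: inner_commute)
lemma normV: "a \<in> P \<Longrightarrow> norm (V a x) = norm x" using rep by (simp add: isom_rep_crp_def)
lemma VV: "a \<in> P \<Longrightarrow> b \<in> P \<Longrightarrow> V a (V b x) = V (b + a) x"
  using rep unfolding isom_rep_crp_def by (metis comp_apply)
lemma Ecomm0: "a \<in> P \<Longrightarrow> b \<in> P \<Longrightarrow> V a (Ad a (V b (Ad b u))) = V b (Ad b (V a (Ad a u)))"
  using rep unfolding isom_rep_crp_def by (metis comp_apply)

lemma eq_by_inner: "(\<And>y. y \<bullet> u = y \<bullet> v) \<Longrightarrow> u = v"
  using vector_eq_ldot by blast

lemma inner_pres: assumes "a \<in> P" shows "V a x \<bullet> V a y = x \<bullet> y"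
proof -
  interpret L: bounded_linear "V a" using bl[OF assms] .
  have "(norm (V a (x + y)))^2 = (norm (x + y))^2" using normV[OF assms] by simp
  then have "(V a x + V a y) \<bullet> (V a x + V a y) = (x + y) \<bullet> (x + y)"
    by (simp add: power2_norm_eq_inner L.add)
  moreover have "V a x \<bullet> V a x = x \<bullet> x" "V a y \<bullet> V a y = y \<bullet> y"
    using normV[OF assms] by (simp_all flip: power2_norm_eq_inner)
  ultimately show ?thesis by (simp add: inner_add inner_commute)
qed

lemma AV: "a \<in> P \<Longrightarrow> Ad a (V a x) = x"
  by (rule eq_by_inner) (simp add: adj[symmetric] inner_pres)

lemma AA: "a \<in> P \<Longrightarrow> b \<in> P \<Longrightarrow> Ad (b + a) y = Ad b (Ad a y)"
  by (rule eq_by_inner) (simp add: adj[symmetric] VV[symmetric] addP)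

lemma Anorm: assumes "a \<in> P" shows "norm (Ad a y) \<le> norm y"
proof (cases "Ad a y = 0")
  case True then show ?thesis by simp
next
  case False
  have "(norm (Ad a y))^2 = V a (Ad a y) \<bullet> y" by (simp add: adj[OF assms] power2_norm_eq_inner)
  also have "\<dots> \<le> norm (V a (Ad a y)) * norm y" by (rule norm_cauchy_schwarz)
  also have "\<dots> = norm (Ad a y) * norm y" by (simp add: normV assms)
  finally show ?thesis using False by (simp add: power2_eq_square)
qed

lemma A0: "a \<in> P \<Longrightarrow> Ad a 0 = 0" using blA linear_simps(3) bounded_linear.linear by blast
lemma Adiff: "a \<in> P \<Longrightarrow> Ad a (x - y) = Ad a x - Ad a y" using blA linear_diff bounded_linear.linear by blast
lemma Vdiff: "a \<in> P \<Longrightarrow> V a (x - y) = V a x - V a y" using bl linear_diff bounded_linear.linear by blast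

lemma indep:
  assumes "a \<in> P" "b \<in> P" "a' \<in> P" "b' \<in> P" "a - b = a' - b'"
  shows "Ad b (V a x) = Ad b' (V a' x)"
proof -
  obtain c d where cd: "c \<in> P" "d \<in> P" "-b' + b = c - d" using dec by blast
  have e1: "b + d = b' + c" using ga1[OF cd(3)] .
  have e2: "a + d = a' + c" using ga1[of a' a c d] ga2[OF assms(5)] cd(3) by simp
  have "Ad b (V a x) = Ad b (Ad d (V d (V a x)))" using AV cd by simp
  also have "\<dots> = Ad (b + d) (V (a + d) x)" using AA VV assms cd by simp
  also have "\<dots> = Ad (b' + c) (V (a' + c) x)" using e1 e2 by simp
  also have "\<dots> = Ad b' (Ad c (V c (V a' x)))" using AA VV assms cd by simp
  also have "\<dots> = Ad b' (V a' x)" using AV cd by simp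
  finally show ?thesis .
qed

lemma Wop_eq: assumes "a \<in> P" "b \<in> P" "g = a - b" shows "Wop P V g = Ad b \<circ> V a"
proof -
  define ab where "ab = (SOME ab. fst ab \<in> P \<and> snd ab \<in> P \<and> g = fst ab - snd ab)"
  have "\<exists>ab. fst ab \<in> P \<and> snd ab \<in> P \<and> g = fst ab - snd ab" using assms by (intro exI[of _ "(a,b)"]) auto
  then have h: "fst ab \<in> P \<and> snd ab \<in> P \<and> g = fst ab - snd ab" unfolding ab_def by (rule someI_ex)
  have "Wop P V g = Ad (snd ab) \<circ> V (fst ab)" unfolding Wop_def ab_def Let_def by simp
  also have "\<dots> = Ad b \<circ> V a"
  proof
    fix x
    have "fst ab - snd ab = a - b" using h assms by simp
    then show "(Ad (snd ab) \<circ> V (fst ab)) x = (Ad b \<circ> V a) x"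
      using indep[of "fst ab" "snd ab" a b x] h assms by simp
  qed
  finally show ?thesis .
qed

lemma Wadj: assumes "a \<in> P" "b \<in> P" "g = a - b" shows "adjoint (Wop P V g) = Ad a \<circ> V b"
  unfolding Wop_eq[OF assms] by (rule adjoint_unique) (simp add: adj' adj assms)

lemma Eop_eq: assumes "a \<in> P" "b \<in> P" "g = a - b"
  shows "Eop P V g x = Ad b (V a (Ad a (V b x)))"
proof -
  have "Eop P V g x = Wop P V g (adjoint (Wop P V g) x)" unfolding Eop_def by simp
  also have "\<dots> = Ad b (V a (Ad a (V b x)))" by (subst Wadj[OF assms]) (simp add: Wop_eq[OF assms])
  finally show ?thesis .
qed


lemma ga3: "(a + v) - (b + v) = a - (b::'g)"
  by (simp only: diff_conv_add_uminus minus_add add.assoc add_minus_cancel)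

lemma ga4: "(c - a) + (a - b) = c - (b::'g)"
  by (simp only: diff_conv_add_uminus add.assoc minus_add_cancel)

lemma Wbl: "bounded_linear (Wop P V g)"
proof -
  obtain a b where ab: "a \<in> P" "b \<in> P" "g = a - b" using dec by blast
  show ?thesis unfolding Wop_eq[OF ab] comp_def
    by (rule bounded_linear_compose[OF blA[OF ab(2)] bl[OF ab(1)]])
qed

lemma part_iso: "partial_isometry (Wop P V g)"
proof -
  obtain a b where ab: "a \<in> P" "b \<in> P" "g = a - b" using dec by blast
  define T where "T = Wop P V g"
  have T: "T x = Ad b (V a x)" for x unfolding T_def Wop_eq[OF ab] by simp
  define Q where "Q x = Ad a (V b (Ad b (V a x)))" for x
  have TT: "T x \<bullet> T x = x \<bullet> Q x" for x
    unfolding T Q_def by (simp add: adj' adj ab)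
  have TQ: "T (Q x) = T x" for x
  proof -
    have "T (Q x) = Ad b (V a (Ad a (V b (Ad b (V a x)))))" unfolding T Q_def ..
    also have "V a (Ad a (V b (Ad b (V a x)))) = V b (Ad b (V a (Ad a (V a x))))"
      by (rule Ecomm0[OF ab(1,2)])
    also have "Ad b (V b (Ad b (V a (Ad a (V a x))))) = Ad b (V a (Ad a (V a x)))"
      by (rule AV[OF ab(2)])
    also have "Ad a (V a x) = x" by (rule AV[OF ab(1)])
    finally show ?thesis unfolding T .
  qed
  have "\<forall>x. (\<forall>y. T y = 0 \<longrightarrow> x \<bullet> y = 0) \<longrightarrow> norm (T x) = norm x"
  proof (intro allI impI)
    fix x assume h: "\<forall>y. T y = 0 \<longrightarrow> x \<bullet> y = 0"
    have "T (x - Q x) = 0" unfolding T using TQ[of x] unfolding T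
      by (simp add: Adiff Vdiff ab)
    then have "x \<bullet> (x - Q x) = 0" using h by blast
    then have "x \<bullet> x = x \<bullet> Q x" by (simp add: inner_diff)
    then have "(norm (T x))^2 = (norm x)^2" using TT[of x] by (simp add: power2_norm_eq_inner)
    then show "norm (T x) = norm x" by (simp add: power2_eq_iff_nonneg)
  qed
  then show ?thesis unfolding partial_isometry_def T_def[symmetric] using Wbl T_def by blast
qed

lemma common_den:
  assumes "a1 \<in> P" "b1 \<in> P" "a2 \<in> P" "b2 \<in> P"
  obtains u v where "u \<in> P" "v \<in> P" "b1 + v = b2 + u"
proof -
  obtain u v where "u \<in> P" "v \<in> P" "-b2 + b1 = u - v" using dec by blast
  then show ?thesis using ga1 that by blast
qed

lemma part_comm: "Eop P V g \<circ> Eop P V h = Eop P V h \<circ> Eop P V g"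
proof -
  obtain a1 b1 where 1: "a1 \<in> P" "b1 \<in> P" "g = a1 - b1" using dec by blast
  obtain a2 b2 where 2: "a2 \<in> P" "b2 \<in> P" "h = a2 - b2" using dec by blast
  obtain u v where uv: "u \<in> P" "v \<in> P" "b1 + v = b2 + u" using common_den 1 2 by metis
  define c where "c = b1 + v"
  define a where "a = a1 + v"
  define a' where "a' = a2 + u"
  have P: "a \<in> P" "a' \<in> P" "c \<in> P" using 1 2 uv addP by (auto simp: a_def a'_def c_def)
  have g: "g = a - c" unfolding a_def c_def 1 by (rule ga3[symmetric])
  have h: "h = a' - c" unfolding a'_def c_def uv(3) 2 by (rule ga3[symmetric])
  show ?thesis
  proof
    fix x
    define w where "w = V c x"
    have "(Eop P V g \<circ> Eop P V h) x = Ad c (V a (Ad a (V c (Ad c (V a' (Ad a' w))))))"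
      by (simp add: Eop_eq[OF P(1,3) g] Eop_eq[OF P(2,3) h] w_def)
    also have "V a (Ad a (V c (Ad c (V a' (Ad a' w))))) = V c (Ad c (V a (Ad a (V a' (Ad a' w)))))"
      by (rule Ecomm0[OF P(1,3)])
    also have "V a (Ad a (V a' (Ad a' w))) = V a' (Ad a' (V a (Ad a w)))"
      by (rule Ecomm0[OF P(1,2)])
    also have "V c (Ad c (V a' (Ad a' (V a (Ad a w))))) = V a' (Ad a' (V c (Ad c (V a (Ad a w)))))"
      by (rule Ecomm0[OF P(3,2)])
    also have "Ad c (V a' (Ad a' (V c (Ad c (V a (Ad a w)))))) = (Eop P V h \<circ> Eop P V g) x"
      by (simp add: Eop_eq[OF P(1,3) g] Eop_eq[OF P(2,3) h] w_def)
    finally show "(Eop P V g \<circ> Eop P V h) x = (Eop P V h \<circ> Eop P V g) x" .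
  qed
qed

lemma Equad: assumes "a \<in> P" "b \<in> P" "g = a - b"
  shows "Eop P V g x \<bullet> x = (norm (Ad a (V b x)))^2"
  unfolding Eop_eq[OF assms] by (simp add: adj' adj assms power2_norm_eq_inner)

lemma part_le: assumes "g1 - g2 \<in> P" shows "op_le (Eop P V g1) (Eop P V g2)"
proof -
  define p where "p = g1 - g2"
  obtain a b where ab: "a \<in> P" "b \<in> P" "g2 = a - b" using dec by blast
  have g1: "g1 = (p + a) - b"
  proof -
    have "g1 = p + g2" unfolding p_def by (simp only: diff_add_cancel)
    then show ?thesis unfolding ab(3) by (simp only: diff_conv_add_uminus add.assoc)
  qed
  have pP: "p \<in> P" "p + a \<in> P" using assms ab addP by (auto simp: p_def)
  show ?thesis unfolding op_le_def
  proof
    fix x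
    have "Eop P V g1 x \<bullet> x = (norm (Ad p (Ad a (V b x))))^2"
      unfolding Equad[OF pP(2) ab(2) g1] AA[OF ab(1) pP(1)] ..
    also have "\<dots> \<le> (norm (Ad a (V b x)))^2" by (rule power_mono[OF Anorm[OF pP(1)]]) simp
    also have "\<dots> = Eop P V g2 x \<bullet> x" unfolding Equad[OF ab] ..
    finally show "Eop P V g1 x \<bullet> x \<le> Eop P V g2 x \<bullet> x" .
  qed
qed

lemma part_mult: "Wop P V g \<circ> Wop P V h = Eop P V g \<circ> Wop P V (h + g)"
proof -
  obtain a1 b1 where 1: "a1 \<in> P" "b1 \<in> P" "g = a1 - b1" using dec by blast
  obtain c1 d1 where 2: "c1 \<in> P" "d1 \<in> P" "h = c1 - d1" using dec by blast
  obtain u v where uv: "u \<in> P" "v \<in> P" "a1 + v = d1 + u" using common_den[OF 1(1,2) 2(1,2)] 1 2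
    using dec ga1 by metis
  define a where "a = a1 + v"
  define b where "b = b1 + v"
  define c where "c = c1 + u"
  have P: "a \<in> P" "b \<in> P" "c \<in> P" using 1 2 uv addP by (auto simp: a_def b_def c_def)
  have g: "g = a - b" unfolding a_def b_def 1 by (rule ga3[symmetric])
  have h: "h = c - a" unfolding a_def c_def uv(3) 2 by (rule ga3[symmetric])
  have hg: "h + g = c - b" unfolding g h by (rule ga4)
  show ?thesis
  proof
    fix x
    define y where "y = V c x"
    have "(Wop P V g \<circ> Wop P V h) x = Ad b (V a (Ad a y))"
      by (simp add: Wop_eq[OF P(1,2) g] Wop_eq[OF P(3,1) h] y_def)
    also have "\<dots> = Ad b (V b (Ad b (V a (Ad a y))))" by (simp add: AV P)
    also have "V b (Ad b (V a (Ad a y))) = V a (Ad a (V b (Ad b y)))"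
      by (rule Ecomm0[OF P(2,1)])
    also have "Ad b (V a (Ad a (V b (Ad b y)))) = (Eop P V g \<circ> Wop P V (h + g)) x"
      by (simp add: Eop_eq[OF P(1,2) g] Wop_eq[OF P(3,2) hg] y_def)
    finally show "(Wop P V g \<circ> Wop P V h) x = (Eop P V g \<circ> Wop P V (h + g)) x" .
  qed
qed


lemma trans_int: assumes "a \<in> P" "c \<in> interior P" shows "a + c \<in> interior P"
proof -
  define S where "S = (\<lambda>x. -a + x) -` interior P"
  have "open S" unfolding S_def by (rule continuous_open_vimage) (auto intro!: continuous_intros)
  moreover have "S \<subseteq> P"
  proof
    fix x assume "x \<in> S"
    then have "-a + x \<in> P" unfolding S_def using interior_subset by auto
    then have "a + (-a + x) \<in> P" using addP assms(1) by blast
    then show "x \<in> P" by (simp only: add_minus_cancel)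
  qed
  ultimately have "S \<subseteq> interior P" by (rule interior_maximal[rotated])
  moreover have "a + c \<in> S" unfolding S_def using assms(2) by (simp only: vimage_eq minus_add_cancel)
  ultimately show ?thesis by blast
qed

lemma int_ne: "\<exists>c. c \<in> interior P"
proof (rule ccontr)
  assume "\<not> ?thesis"
  then have "interior P = {}" by blast
  moreover have "0 \<in> closure (interior P)" using adm zeroP by (auto simp: admissible_semigroup_def)
  ultimately show False by simp
qed

lemma part_cont: "continuous_on UNIV (\<lambda>g. Wop P V g x)"
proof (rule continuous_at_imp_continuous_on, intro ballI)
  fix g0 :: 'g
  obtain a0 b0 where ab: "a0 \<in> P" "b0 \<in> P" "g0 = a0 - b0" using dec by blast
  obtain c where c: "c \<in> interior P" using int_ne by blast
  have cP: "c \<in> P" using c interior_subset by blast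
  define b where "b = b0 + c"
  have bP: "b \<in> P" unfolding b_def using ab cP addP by blast
  define U where "U = (\<lambda>g. g + b) -` interior P"
  have U: "open U" unfolding U_def by (rule continuous_open_vimage) (auto intro!: continuous_intros)
  have "g0 + b = a0 + c" unfolding ab(3) b_def
    by (simp only: diff_conv_add_uminus add.assoc minus_add_cancel)
  then have g0U: "g0 \<in> U" unfolding U_def using trans_int[OF ab(1) c] by simp
  have eq: "Wop P V g x = Ad b (V (g + b) x)" if "g \<in> U" for g
  proof -
    have "g + b \<in> P" using that interior_subset unfolding U_def by auto
    moreover have "g = (g + b) - b" by (simp only: add_diff_cancel)
    ultimately have "Wop P V g = Ad b \<circ> V (g + b)" by (rule Wop_eq[OF _ bP])
    then show ?thesis by simp
  qed
  have "isCont (\<lambda>g. Ad b (V (g + b) x)) g0"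
  proof (rule isCont_o2[where f="\<lambda>g. V (g + b) x"])
    show "isCont (\<lambda>g. V (g + b) x) g0"
    proof (rule isCont_o2[where f="\<lambda>g. g + b" and g="\<lambda>a. V a x"])
      show "isCont (\<lambda>g. g + b) g0" by (auto intro!: continuous_intros)
      have "continuous_on P (\<lambda>a. V a x)" using rep by (simp add: isom_rep_crp_def)
      then show "isCont (\<lambda>a. V a x) (g0 + b)" using g0U unfolding U_def
        by (intro continuous_on_interior) auto
    qed
    show "isCont (Ad b) (V (g0 + b) x)"
      using blA[OF bP] by (simp add: bounded_linear.isCont[OF _ continuous_ident])
  qed
  moreover have ev: "eventually (\<lambda>g. Wop P V g x = Ad b (V (g + b) x)) (nhds g0)"
    unfolding eventually_nhds using U g0U eq by blast
  ultimately show "isCont (\<lambda>g. Wop P V g x) g0" using isCont_cong[OF ev] by simp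
qed

end

theorem mainTheorem1:
  fixes P :: "'g::{topological_group_add,t2_space,second_countable_topology} set"
    and V :: "'g \<Rightarrow> 'h::{real_inner,complete_space} \<Rightarrow> 'h"
  assumes "admissible_semigroup P"
    and "isom_rep_crp P V"
  shows "(\<forall>g. \<forall>a\<in>P. \<forall>b\<in>P. g = a - b \<longrightarrow> Wop P V g = adjoint (V b) \<circ> V a)
       \<and> (\<forall>g. partial_isometry (Wop P V g))
       \<and> (\<forall>g h. Eop P V g \<circ> Eop P V h = Eop P V h \<circ> Eop P V g)
       \<and> (\<forall>g1 g2. g1 - g2 \<in> P \<longrightarrow> op_le (Eop P V g1) (Eop P V g2))
       \<and> (\<forall>x. continuous_on UNIV (\<lambda>g. Wop P V g x))
       \<and> (\<forall>g h. Wop P V g \<circ> Wop P V h = Eop P V g \<circ> Wop P V (h + g))"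
proof -
  interpret crp P V using assms by unfold_locales
  show ?thesis using Wop_eq part_iso part_comm part_le part_cont part_mult by blast
qed

end
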